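(* Let $N\ge1$, $k\in\{1,\dots,N\}$, $\mathcal{I}_k:=\big((N-2k)\frac{\pi}{2},(N-2(k-1))\frac{\pi}{2}\big)$, and $G(A):=\sum_{i=1}^N\arctan(\lambda_i(A))$ for $A\in\mathcal{S}(N)$. For every compact set $\Sigma\subset\mathcal{I}_k$ there exists $C=C(\Sigma)>0$ such that every $A\in\mathcal{S}(N)$ with $G(A)\in\Sigma$ satisfies $|\lambda_j(A)|\le C$ for some $j=j_A\in\{1,\dots,N\}$.
   Context: $\mathcal{S}(N)$ is the space of real symmetric $N\times N$ matrices and $\lambda_1(A)\le\dots\le\lambda_N(A)$ are the eigenvalues of $A$. *)

theory Defs
  imports "Jordan_Normal_Form.Char_Poly" "HOL-Analysis.Analysis"
begin

definition sym_mats :: "nat \<Rightarrow> real mat set" where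
  "sym_mats N = {A. A \<in> carrier_mat N N \<and> transpose_mat A = A}"

text \<open>The eigenvalues of A, listed with algebraic multiplicity in nondecreasing order:
  the unique sorted list whose linear factors multiply to the characteristic polynomial
  (it exists for real symmetric matrices).\<close>
definition eig_list :: "real mat \<Rightarrow> real list" where
  "eig_list A = (THE ev. sorted ev \<and> length ev = dim_row A \<and>
      char_poly A = prod_list (map (\<lambda>a. [:- a, 1:]) ev))"

text \<open>lambda_i(A) for i = 1..N (1-based).\<close>
definition eig :: "real mat \<Rightarrow> nat \<Rightarrow> real" where
  "eig A i = eig_list A ! (i - 1)"

definition Gfun :: "nat \<Rightarrow> real mat \<Rightarrow> real" where
  "Gfun N A = (\<Sum>i=1..N. arctan (eig A i))"

end

theory Submission
  imports Defs
begin

lemma arctan_near: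
  fixes C \<eta> y :: real
  assumes "C = tan (pi/2 - \<eta>)" "0 < \<eta>" "\<eta> < pi/2" "\<bar>y\<bar> > C"
  shows "\<bar>arctan y - (if y > 0 then 1 else -1) * pi/2\<bar> < \<eta>"
proof -
  have aC: "arctan C = pi/2 - \<eta>" using assms(1-3) by (simp add: arctan_tan)
  have Cpos: "C > 0" using assms(1-3) by (simp add: tan_gt_zero)
  show ?thesis
  proof (cases "y > 0")
    case True
    then have "y > C" using assms(4) by auto
    then have "arctan y > arctan C" by (simp add: arctan_less_iff)
    moreover have "arctan y < pi/2" using arctan_ubound by simp
    ultimately show ?thesis using True aC by auto
  next
    case False
    then have "-y > C" using assms(4) by auto
    then have "arctan (-y) > arctan C" by (simp add: arctan_less_iff)
    moreover have "arctan (-y) < pi/2" using arctan_ubound by simp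
    ultimately show ?thesis using False aC by (auto simp: arctan_minus)
  qed
qed

lemma key:
  fixes f :: "nat \<Rightarrow> real" and C \<eta> :: real
  assumes "\<forall>i\<in>{1..N}. \<bar>f i\<bar> > C" "C = tan (pi/2 - \<eta>)" "0 < \<eta>" "\<eta> < pi/2" "N \<ge> 1"
  shows "\<exists>m::nat. m \<le> N \<and> \<bar>(\<Sum>i=1..N. arctan (f i)) - (real N - 2 * real m) * pi / 2\<bar> < N * \<eta>"
proof -
  define s where "s i = (if f i > 0 then 1 else -1::real)" for i
  define m where "m = card {i\<in>{1..N}. \<not> f i > 0}"
  have each: "\<bar>arctan (f i) - s i * pi/2\<bar> < \<eta>" if "i \<in> {1..N}" for i
    using arctan_near[OF assms(2-4)] assms(1) that unfolding s_def by auto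
  have "\<bar>(\<Sum>i=1..N. arctan (f i)) - (\<Sum>i=1..N. s i * pi/2)\<bar>
      = \<bar>\<Sum>i=1..N. arctan (f i) - s i * pi/2\<bar>" by (simp add: sum_subtractf)
  also have "\<dots> \<le> (\<Sum>i=1..N. \<bar>arctan (f i) - s i * pi/2\<bar>)" by (rule sum_abs)
  also have "\<dots> < (\<Sum>i=1..N. \<eta>)"
    by (rule sum_strict_mono) (use assms(5) each in auto)
  also have "\<dots> = N * \<eta>" by simp
  finally have b: "\<bar>(\<Sum>i=1..N. arctan (f i)) - (\<Sum>i=1..N. s i * pi/2)\<bar> < N * \<eta>" .
  have c: "card {i\<in>{1..N}. f i > 0} + m = N"
  proof -
    have "N = card {1..N}" by simp
    also have "{1..N} = {i\<in>{1..N}. f i > 0} \<union> {i\<in>{1..N}. \<not> f i > 0}" by blast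
    also have "card \<dots> = card {i\<in>{1..N}. f i > 0} + card {i\<in>{1..N}. \<not> f i > 0}"
      by (rule card_Un_disjoint) auto
    finally show ?thesis unfolding m_def by simp
  qed
  have "(\<Sum>i=1..N. s i) = real (card {i\<in>{1..N}. f i > 0}) - real m"
    unfolding s_def m_def by (simp add: sum.If_cases Int_def)
  also have "\<dots> = real N - 2 * real m" using c by (metis add_diff_cancel_right' of_nat_add mult_2 diff_diff_eq)
  finally have "(\<Sum>i=1..N. s i * pi/2) = (real N - 2 * real m) * pi / 2"
    by (simp add: sum_divide_distrib[symmetric] sum_distrib_right[symmetric])
  moreover have "m \<le> N" using c by simp
  ultimately show ?thesis using b by auto
qed

theorem lemma6p19:
  fixes N k :: nat and \<Sigma> :: "real set"
  assumes "N \<ge> 1" and "k \<in> {1..N}"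
    and "compact \<Sigma>"
    and "\<Sigma> \<subseteq> {(real N - 2 * real k) * pi / 2 <..< (real N - 2 * (real k - 1)) * pi / 2}"
  shows "\<exists>C>0. \<forall>A\<in>sym_mats N. Gfun N A \<in> \<Sigma> \<longrightarrow> (\<exists>j\<in>{1..N}. \<bar>eig A j\<bar> \<le> C)"
proof (cases "\<Sigma> = {}")
  case True
  then show ?thesis by (intro exI[of _ 1]) auto
next
  case False
  define a where "a = (real N - 2 * real k) * pi / 2"
  define b where "b = (real N - 2 * (real k - 1)) * pi / 2"
  obtain lo where lo: "lo \<in> \<Sigma>" "\<forall>x\<in>\<Sigma>. lo \<le> x"
    using compact_attains_inf[OF assms(3) False] by blast
  obtain hi where hi: "hi \<in> \<Sigma>" "\<forall>x\<in>\<Sigma>. x \<le> hi"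
    using compact_attains_sup[OF assms(3) False] by blast
  define \<epsilon> where "\<epsilon> = min (lo - a) (b - hi)"
  have ep: "\<epsilon> > 0" using lo hi assms(4) unfolding \<epsilon>_def a_def b_def by auto
  define \<eta> where "\<eta> = min (\<epsilon> / N) (pi/4)"
  have eta: "0 < \<eta>" "\<eta> < pi/2" "N * \<eta> \<le> \<epsilon>"
    using ep assms(1) pi_gt_zero unfolding \<eta>_def
    by (auto simp: min_def field_simps)
  define C where "C = tan (pi/2 - \<eta>)"
  have Cpos: "C > 0" using eta unfolding C_def by (simp add: tan_gt_zero)
  show ?thesis
  proof (intro exI[of _ C] conjI Cpos ballI impI)
    fix A assume A: "A \<in> sym_mats N" "Gfun N A \<in> \<Sigma>"
    show "\<exists>j\<in>{1..N}. \<bar>eig A j\<bar> \<le> C"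
    proof (rule ccontr)
      assume "\<not> ?thesis"
      then have "\<forall>i\<in>{1..N}. \<bar>eig A i\<bar> > C" by auto
      from key[OF this C_def eta(1,2) assms(1)] obtain m :: nat where
        m: "m \<le> N" "\<bar>Gfun N A - (real N - 2 * real m) * pi / 2\<bar> < N * \<eta>"
        unfolding Gfun_def by blast
      have in1: "lo \<le> Gfun N A" "Gfun N A \<le> hi" using lo hi A by auto
      show False
      proof (cases "m \<ge> k")
        case True
        then have "(real N - 2 * real m) * pi / 2 \<le> a" unfolding a_def
          using pi_gt_zero by (intro divide_right_mono mult_right_mono) auto
        then show False using m(2) eta(3) in1 unfolding \<epsilon>_def by auto
      next
        case False
        then have "(real N - 2 * real m) * pi / 2 \<ge> b" unfolding b_def
          using pi_gt_zero by (intro divide_right_mono mult_right_mono) auto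
        then show False using m(2) eta(3) in1 unfolding \<epsilon>_def by auto
      qed
    qed
  qed
qed

end
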